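(* Let $d_1,d_2$ be positive integers and $C>0$. Let $\sigma\in\{+1,-1\}^{2n}$ be a uniformly random labelling of $[2n]$ with exactly $n$ entries equal to $+1$. Let $T$ be a (fixed) tree whose vertices lie in $[2n]$ and which has at most $C\log n$ edges; for an edge $e=\{u,w\}$ of $T$ let $d_e=d_1$ if $\sigma_u=\sigma_w$ and $d_e=d_2$ otherwise. Then $$\mathbb{E}_{\sigma}\Big(\prod_{e\in T}\frac{d_e}{n}\Big)\le\Big(\frac{d_1+d_2}{2n}\Big)^{|T|}\Big(1+O\Big(\frac{(\log n)^2}{n}\Big)\Big),$$ where $|T|$ is the number of edges of $T$, $\mathbb{E}_\sigma$ is expectation over $\sigma$, and the implied constant depends only on $d_1,d_2,C$. *)

theory Defs
  imports "HOL-Probability.Probability"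
begin

definition simple_graph :: "'a set \<Rightarrow> 'a set set \<Rightarrow> bool" where
  "simple_graph V E \<longleftrightarrow> finite V \<and> (\<forall>e\<in>E. \<exists>u w. e = {u, w} \<and> u \<noteq> w \<and> u \<in> V \<and> w \<in> V)"

definition graph_connected :: "'a set \<Rightarrow> 'a set set \<Rightarrow> bool" where
  "graph_connected V E \<longleftrightarrow> (\<forall>u\<in>V. \<forall>w\<in>V. (u, w) \<in> {(x, y). {x, y} \<in> E}\<^sup>*)"

definition has_cycle :: "'a set set \<Rightarrow> bool" where
  "has_cycle E \<longleftrightarrow> (\<exists>vs. length vs \<ge> 3 \<and> distinct vs \<and>
      (\<forall>i<length vs. {vs ! i, vs ! ((i + 1) mod length vs)} \<in> E))"

definition is_tree :: "'a set \<Rightarrow> 'a set set \<Rightarrow> bool" where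
  "is_tree V E \<longleftrightarrow> simple_graph V E \<and> V \<noteq> {} \<and> graph_connected V E \<and> \<not> has_cycle E"

text \<open>Balanced labellings of [2n] = {1..2n}: sigma i in {+1,-1} on [2n], exactly n entries +1,
  and sigma i = 0 outside [2n] (normalisation so the set is finite).\<close>
definition balanced_labellings :: "nat \<Rightarrow> (nat \<Rightarrow> int) set" where
  "balanced_labellings n = {\<sigma>. (\<forall>i\<in>{1..2*n}. \<sigma> i \<in> {1, -1}) \<and> (\<forall>i. i \<notin> {1..2*n} \<longrightarrow> \<sigma> i = 0)
      \<and> card {i\<in>{1..2*n}. \<sigma> i = 1} = n}"

definition edge_weight :: "nat \<Rightarrow> nat \<Rightarrow> (nat \<Rightarrow> int) \<Rightarrow> nat set \<Rightarrow> nat" where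
  "edge_weight d1 d2 \<sigma> e = (if \<forall>u\<in>e. \<forall>w\<in>e. \<sigma> u = \<sigma> w then d1 else d2)"

end

theory Submission imports Defs "HOL-Real_Asymp.Real_Asymp" begin

lemma has_cycle_mono: "has_cycle E' \<Longrightarrow> E' \<subseteq> E \<Longrightarrow> has_cycle E"
  unfolding has_cycle_def by blast

lemma leaf_exists:
  assumes fin: "finite E" and sg: "\<forall>e\<in>E. \<exists>a b. e = {a,b} \<and> a \<noteq> b"
    and nc: "\<not> has_cycle E" and ne: "E \<noteq> {}"
  shows "\<exists>u v. {u,v} \<in> E \<and> u \<noteq> v \<and> (\<forall>e\<in>E - {{u,v}}. v \<notin> e)"
proof -
  define Vt where "Vt = \<Union>E"
  have fe: "\<forall>e\<in>E. finite e"
  proof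
    fix e assume "e \<in> E" then obtain a b where "e = {a,b}" using sg by blast
    thus "finite e" by simp
  qed
  have finVt: "finite Vt" unfolding Vt_def using fin fe by (intro finite_Union) auto
  define P where "P = {vs. distinct vs \<and> set vs \<subseteq> Vt \<and> length vs \<ge> 2 \<and>
      (\<forall>i. Suc i < length vs \<longrightarrow> {vs!i, vs!Suc i} \<in> E)}"
  have "P \<subseteq> {xs. set xs \<subseteq> Vt \<and> length xs \<le> card Vt}"
  proof
    fix xs assume "xs \<in> P"
    hence dx: "distinct xs" and sx: "set xs \<subseteq> Vt" unfolding P_def by simp_all
    have "length xs = card (set xs)" using dx by (simp add: distinct_card)
    also have "\<dots> \<le> card Vt" using sx by (rule card_mono[OF finVt])
    finally have "length xs \<le> card Vt" .
    thus "xs \<in> {xs. set xs \<subseteq> Vt \<and> length xs \<le> card Vt}" using sx by simp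
  qed
  hence finP: "finite P" by (rule finite_subset) (rule finite_lists_length_le[OF finVt])
  obtain e0 where e0: "e0 \<in> E" using ne by blast
  then obtain a b where ab0: "e0 = {a,b}" "a \<noteq> b" using sg by blast
  have ab: "{a,b} \<in> E" "a \<noteq> b" using ab0 e0 by simp_all
  have "[a,b] \<in> P" using ab unfolding P_def Vt_def by auto
  hence "P \<noteq> {}" by blast
  define L where "L = Max (length ` P)"
  have "L \<in> length ` P" unfolding L_def using finP \<open>P \<noteq> {}\<close> by simp
  then obtain vs where vs: "vs \<in> P" "length vs = L" by blast
  have maxL: "\<And>ws. ws \<in> P \<Longrightarrow> length ws \<le> L" unfolding L_def using finP by simp
  have dist: "distinct vs" and sub: "set vs \<subseteq> Vt" and len: "length vs \<ge> 2"
    and adj: "\<And>i. Suc i < length vs \<Longrightarrow> {vs!i, vs!Suc i} \<in> E"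
    using vs unfolding P_def by auto
  define v where "v = vs!0"
  define u where "u = vs!1"
  have uvE: "{u,v} \<in> E" using adj[of 0] len unfolding u_def v_def by (simp add: insert_commute)
  have uv: "u \<noteq> v" using nth_eq_iff_index_eq[OF dist, of 1 0] len unfolding u_def v_def
    by fastforce
  have leaf: "\<forall>e\<in>E - {{u,v}}. v \<notin> e"
  proof (rule ccontr)
    assume "\<not> ?thesis"
    then obtain e where e: "e \<in> E" "e \<noteq> {u,v}" "v \<in> e" by blast
    obtain a b where abe: "e = {a,b}" "a \<noteq> b" using sg e(1) by blast
    define x where "x = (if a = v then b else a)"
    have ex: "e = {v,x}" "x \<noteq> v" using abe e(3) unfolding x_def by auto
    have xu: "x \<noteq> u"
    proof
      assume "x = u" hence "e = {u,v}" using ex(1) by blast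
      thus False using e(2) by contradiction
    qed
    have xVt: "x \<in> Vt" using e ex unfolding Vt_def by blast
    show False
    proof (cases "x \<in> set vs")
      case False
      have "x # vs \<in> P" unfolding P_def
      proof (intro CollectI conjI allI impI)
        show "distinct (x # vs)" using False dist by simp
        show "set (x # vs) \<subseteq> Vt" using sub xVt by simp
        show "2 \<le> length (x # vs)" using len by simp
        fix i assume i: "Suc i < length (x # vs)"
        show "{(x # vs) ! i, (x # vs) ! Suc i} \<in> E"
        proof (cases i)
          case 0 thus ?thesis using e ex unfolding v_def by (simp add: insert_commute)
        next
          case (Suc j) thus ?thesis using adj[of j] i by simp
        qed
      qed
      hence "length (x # vs) \<le> L" by (rule maxL)
      thus False using vs(2) by simp
    next
      case True
      then obtain j where j: "j < length vs" "vs!j = x" by (auto simp: in_set_conv_nth)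
      have "j \<noteq> 0"
      proof assume "j = 0" thus False using j ex(2) unfolding v_def by simp qed
      moreover have "j \<noteq> 1"
      proof assume "j = 1" thus False using j xu unfolding u_def by simp qed
      ultimately have j2: "j \<ge> 2" by simp
      define cs where "cs = take (Suc j) vs"
      have lcs: "length cs = Suc j" unfolding cs_def using j by simp
      have "has_cycle E" unfolding has_cycle_def
      proof (intro exI[of _ cs] conjI allI impI)
        show "3 \<le> length cs" using lcs j2 by simp
        show "distinct cs" unfolding cs_def using dist by simp
        fix i assume i: "i < length cs"
        show "{cs ! i, cs ! ((i + 1) mod length cs)} \<in> E"
        proof (cases "i < j")
          case True
          hence "(i+1) mod length cs = Suc i" using lcs by simp
          thus ?thesis unfolding cs_def using True adj[of i] j by simp
        next
          case False
          hence "i = j" using i lcs by simp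
          thus ?thesis using lcs e ex j unfolding cs_def v_def by (simp add: insert_commute)
        qed
      qed
      thus False using nc by simp
    qed
  qed
  show ?thesis using uvE uv leaf by blast
qed


definition swp :: "nat \<Rightarrow> nat \<Rightarrow> nat \<Rightarrow> nat" where
  "swp v x i = (if i = v then x else if i = x then v else i)"

lemma swp_swp[simp]: "swp v x (swp v x i) = i" by (auto simp: swp_def)
lemma swp_in: "v \<in> A \<Longrightarrow> x \<in> A \<Longrightarrow> i \<in> A \<Longrightarrow> swp v x i \<in> A" by (auto simp: swp_def)
lemma swp_out: "i \<noteq> v \<Longrightarrow> i \<noteq> x \<Longrightarrow> swp v x i = i" by (auto simp: swp_def)
lemma swp_v[simp]: "swp v x v = x" by (auto simp: swp_def)

lemma bal_swp:
  assumes s: "\<sigma> \<in> balanced_labellings n" and v: "v \<in> {1..2*n}" and x: "x \<in> {1..2*n}"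
  shows "\<sigma> \<circ> swp v x \<in> balanced_labellings n"
proof -
  let ?A = "{1..2*n}"
  have s1: "\<forall>i\<in>?A. \<sigma> i \<in> {1, -1}" and s2: "\<forall>i. i \<notin> ?A \<longrightarrow> \<sigma> i = 0"
    and s3: "card {i\<in>?A. \<sigma> i = 1} = n" using s unfolding balanced_labellings_def by auto
  have "{i\<in>?A. \<sigma> (swp v x i) = 1} = swp v x ` {i\<in>?A. \<sigma> i = 1}"
  proof (intro set_eqI iffI)
    fix i assume "i \<in> {i\<in>?A. \<sigma> (swp v x i) = 1}"
    hence hi: "i \<in> ?A" "\<sigma> (swp v x i) = 1" by simp_all
    have "swp v x i \<in> ?A" by (rule swp_in[OF v x hi(1)])
    hence "swp v x i \<in> {i\<in>?A. \<sigma> i = 1}" using hi(2) by simp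
    moreover have "i = swp v x (swp v x i)" by simp
    ultimately show "i \<in> swp v x ` {i\<in>?A. \<sigma> i = 1}" by (rule rev_image_eqI)
  next
    fix i assume "i \<in> swp v x ` {i\<in>?A. \<sigma> i = 1}"
    then obtain j where j: "j \<in> ?A" "\<sigma> j = 1" "i = swp v x j" by blast
    have "i \<in> ?A" unfolding j(3) by (rule swp_in[OF v x j(1)])
    moreover have "\<sigma> (swp v x i) = 1" using j(2,3) by simp
    ultimately show "i \<in> {i\<in>?A. \<sigma> (swp v x i) = 1}" by simp
  qed
  moreover have "inj_on (swp v x) X" for X by (rule inj_on_inverseI[of _ "swp v x"]) simp
  ultimately have c: "card {i\<in>?A. \<sigma> (swp v x i) = 1} = n" using s3 by (simp add: card_image)
  show ?thesis unfolding balanced_labellings_def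
  proof (intro CollectI conjI ballI allI impI)
    fix i assume i: "i \<in> ?A"
    have "swp v x i \<in> ?A" by (rule swp_in[OF v x i])
    thus "(\<sigma> \<circ> swp v x) i \<in> {1, -1}" using s1 by simp
  next
    fix i assume i: "i \<notin> ?A"
    have "i \<noteq> v" "i \<noteq> x" using v x i by auto
    hence "swp v x i = i" by (rule swp_out)
    thus "(\<sigma> \<circ> swp v x) i = 0" using s2 i by simp
  next
    show "card {i\<in>?A. (\<sigma> \<circ> swp v x) i = 1} = n" using c by simp
  qed
qed

lemma sum_swp:
  assumes v: "v \<in> {1..2*n}" and x: "x \<in> {1..2*n}"
  shows "(\<Sum>\<sigma>\<in>balanced_labellings n. h \<sigma>) = (\<Sum>\<sigma>\<in>balanced_labellings n. h (\<sigma> \<circ> swp v x))"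
proof (rule sum.reindex_bij_witness[where i="\<lambda>\<sigma>. \<sigma> \<circ> swp v x" and j="\<lambda>\<sigma>. \<sigma> \<circ> swp v x"])
  fix a :: "nat \<Rightarrow> int" show "(a \<circ> swp v x) \<circ> swp v x = a" by (auto simp: fun_eq_iff)
  show "h ((a \<circ> swp v x) \<circ> swp v x) = h a" by (simp add: comp_def fun_eq_iff)
next
  fix b :: "nat \<Rightarrow> int" show "(b \<circ> swp v x) \<circ> swp v x = b" by (auto simp: fun_eq_iff)
next
  fix a assume "a \<in> balanced_labellings n" thus "a \<circ> swp v x \<in> balanced_labellings n" by (rule bal_swp[OF _ v x])
next
  fix a assume "a \<in> balanced_labellings n" thus "a \<circ> swp v x \<in> balanced_labellings n" by (rule bal_swp[OF _ v x])
qed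

lemma count_same:
  assumes s: "\<sigma> \<in> balanced_labellings n" and u: "u \<in> {1..2*n}"
  shows "card {x\<in>{1..2*n}. \<sigma> u = \<sigma> x} = n"
proof -
  let ?A = "{1..2*n}"
  have s1: "\<forall>i\<in>?A. \<sigma> i \<in> {1, -1}" and s3: "card {i\<in>?A. \<sigma> i = 1} = n"
    using s unfolding balanced_labellings_def by auto
  show ?thesis
  proof (cases "\<sigma> u = 1")
    case True
    hence "{x\<in>?A. \<sigma> u = \<sigma> x} = {i\<in>?A. \<sigma> i = 1}" by auto
    thus ?thesis using s3 by simp
  next
    case False
    hence m1: "\<sigma> u = -1" using s1 u by auto
    have "{x\<in>?A. \<sigma> u = \<sigma> x} = ?A - {i\<in>?A. \<sigma> i = 1}"
    proof (intro set_eqI iffI)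
      fix y assume "y \<in> {x\<in>?A. \<sigma> u = \<sigma> x}" thus "y \<in> ?A - {i\<in>?A. \<sigma> i = 1}" using m1 by simp
    next
      fix y assume y: "y \<in> ?A - {i\<in>?A. \<sigma> i = 1}"
      hence "\<sigma> y \<in> {1,-1}" "\<sigma> y \<noteq> 1" using s1 by auto
      hence "\<sigma> y = -1" by simp
      thus "y \<in> {x\<in>?A. \<sigma> u = \<sigma> x}" using y m1 by simp
    qed
    moreover have "card (?A - {i\<in>?A. \<sigma> i = 1}) = card ?A - card {i\<in>?A. \<sigma> i = 1}"
      by (rule card_Diff_subset) auto
    ultimately show ?thesis using s3 by simp
  qed
qed

lemma sum_weights:
  assumes s: "\<sigma> \<in> balanced_labellings n" and u: "u \<in> {1..2*n}"
  shows "(\<Sum>x\<in>{1..2*n}. real (if \<sigma> u = \<sigma> x then d1 else d2)) = real n * (real d1 + real d2)"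
proof -
  let ?A = "{1..2*n}"
  have "?A \<inter> {x. \<sigma> u = \<sigma> x} = {x\<in>?A. \<sigma> u = \<sigma> x}" by blast
  hence c1: "card (?A \<inter> {x. \<sigma> u = \<sigma> x}) = n" using count_same[OF s u] by simp
  have "card (?A \<inter> - {x. \<sigma> u = \<sigma> x}) = card ?A - card (?A \<inter> {x. \<sigma> u = \<sigma> x})"
  proof -
    have "?A \<inter> - {x. \<sigma> u = \<sigma> x} = ?A - (?A \<inter> {x. \<sigma> u = \<sigma> x})" by blast
    thus ?thesis by (simp add: card_Diff_subset)
  qed
  hence c2: "card (?A \<inter> - {x. \<sigma> u = \<sigma> x}) = n" using c1 by simp
  have "(\<Sum>x\<in>?A. real (if \<sigma> u = \<sigma> x then d1 else d2)) =
      (\<Sum>x\<in>?A. if \<sigma> u = \<sigma> x then real d1 else real d2)" by (rule sum.cong) auto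
  also have "\<dots> = real n * real d1 + real n * real d2"
    using sum.If_cases[where A="?A" and P="\<lambda>x. \<sigma> u = \<sigma> x" and h="\<lambda>_. real d1" and g="\<lambda>_. real d2"]
    by (simp only: finite_atLeastAtMost sum_constant c1 c2)
  finally show ?thesis by (simp add: algebra_simps)
qed


lemma edge_weight_pair: "edge_weight d1 d2 \<sigma> {u,v} = (if \<sigma> u = \<sigma> v then d1 else d2)"
  unfolding edge_weight_def by auto

lemma main_sum:
  fixes d1 d2 :: nat
  assumes mn: "m < n"
  shows "\<forall>E. finite E \<and> (\<forall>e\<in>E. \<exists>a b. e = {a,b} \<and> a \<noteq> b \<and> a \<in> {1..2*n} \<and> b \<in> {1..2*n})
     \<and> \<not> has_cycle E \<and> card E = k \<and> k \<le> m \<longrightarrow>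
     (\<Sum>\<sigma>\<in>balanced_labellings n. \<Prod>e\<in>E. real (edge_weight d1 d2 \<sigma> e))
       \<le> (real n * (real d1 + real d2) / (2 * real n - 2 * real m)) ^ k * real (card (balanced_labellings n))"
proof (induction k)
  case 0
  show ?case by auto
next
  case (Suc k)
  let ?S = "balanced_labellings n"
  let ?A = "{1..2*n}"
  define c where "c = real n * (real d1 + real d2) / (2 * real n - 2 * real m)"
  have cpos: "c \<ge> 0" unfolding c_def using mn by simp
  show ?case
  proof (intro allI impI, elim conjE)
    fix E :: "nat set set"
    assume fin: "finite E" and edges: "\<forall>e\<in>E. \<exists>a b. e = {a,b} \<and> a \<noteq> b \<and> a \<in> ?A \<and> b \<in> ?A"
      and nc: "\<not> has_cycle E" and cE: "card E = Suc k" and km: "Suc k \<le> m"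
    have "E \<noteq> {}" using cE by auto
    moreover have "\<forall>e\<in>E. \<exists>a b. e = {a,b} \<and> a \<noteq> b" using edges by blast
    ultimately obtain u v where uvE: "{u,v} \<in> E" and uv: "u \<noteq> v"
      and leaf: "\<forall>e\<in>E - {{u,v}}. v \<notin> e"
      using leaf_exists[OF fin _ nc] by blast
    define E' where "E' = E - {{u,v}}"
    have finE': "finite E'" using fin unfolding E'_def by simp
    have edges': "\<forall>e\<in>E'. \<exists>a b. e = {a,b} \<and> a \<noteq> b \<and> a \<in> ?A \<and> b \<in> ?A"
      using edges unfolding E'_def by blast
    have nc': "\<not> has_cycle E'" using nc has_cycle_mono[of E' E] unfolding E'_def by blast
    have cE': "card E' = k" using cE uvE fin unfolding E'_def by simp
    have uA: "u \<in> ?A" and vA: "v \<in> ?A" using edges uvE by (metis doubleton_eq_iff)+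
    define G where "G = (\<lambda>\<sigma>. \<Prod>e\<in>E'. real (edge_weight d1 d2 \<sigma> e))"
    have Gnn: "G \<sigma> \<ge> 0" for \<sigma> unfolding G_def by (simp add: prod_nonneg)
    have IH: "(\<Sum>\<sigma>\<in>?S. G \<sigma>) \<le> c ^ k * real (card ?S)"
      using Suc.IH finE' edges' nc' cE' km unfolding G_def c_def by simp
    define w where "w = (\<lambda>\<sigma>::nat\<Rightarrow>int. \<lambda>x. real (if \<sigma> u = \<sigma> x then d1 else d2))"
    have prodE: "(\<Prod>e\<in>E. real (edge_weight d1 d2 \<sigma> e)) = w \<sigma> v * G \<sigma>" for \<sigma>
      unfolding G_def E'_def w_def using prod.remove[OF fin uvE, of "\<lambda>e. real (edge_weight d1 d2 \<sigma> e)"]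
      by (simp add: edge_weight_pair)
    define W where "W = \<Union>E'"
    define M where "M = ?A - (W \<union> {u})"
    have finW: "finite W" unfolding W_def using finE' edges' by fastforce
    have vM: "v \<in> M" unfolding M_def W_def E'_def using vA leaf uv by auto
    have cardW: "card W \<le> 2 * k"
    proof -
      have "card W \<le> sum card E'" unfolding W_def by (rule card_Union_le_sum_card)
      also have "\<dots> \<le> sum (\<lambda>_. 2) E'"
      proof (rule sum_mono)
        fix e assume "e \<in> E'" then obtain a b where "e = {a,b}" using edges' by blast
        thus "card e \<le> 2" by (simp add: card_insert_if)
      qed
      finally show ?thesis using cE' by simp
    qed
    have "card (W \<union> {u}) \<le> 2 * k + 1" using cardW card_Un_le[of W "{u}"] by simp
    hence cardM: "card M \<ge> 2 * n - (2 * k + 1)" unfolding M_def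
      using diff_card_le_card_Diff[of "W \<union> {u}" ?A] finW by simp
    hence cardMr: "real (card M) \<ge> 2 * real n - 2 * real m" using km mn by linarith
    have Mpos: "2 * real n - 2 * real m > 0" using mn by simp
    have Gfix: "G (\<sigma> \<circ> swp v x) = G \<sigma>" if x: "x \<in> M" for x \<sigma>
      unfolding G_def
    proof (rule prod.cong[OF refl])
      fix e assume e: "e \<in> E'"
      have "\<forall>y\<in>e. swp v x y = y"
      proof
        fix y assume y: "y \<in> e"
        have "y \<noteq> v" using leaf e y unfolding E'_def by blast
        moreover have "y \<noteq> x" using x e y unfolding M_def W_def by blast
        ultimately show "swp v x y = y" by (rule swp_out)
      qed
      thus "real (edge_weight d1 d2 (\<sigma> \<circ> swp v x) e) = real (edge_weight d1 d2 \<sigma> e)"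
        unfolding edge_weight_def by simp
    qed
    have key: "(\<Sum>\<sigma>\<in>?S. w \<sigma> v * G \<sigma>) = (\<Sum>\<sigma>\<in>?S. w \<sigma> x * G \<sigma>)" if x: "x \<in> M" for x
    proof -
      have xA: "x \<in> ?A" using x unfolding M_def by blast
      have xu: "x \<noteq> u" using x unfolding M_def by blast
      have "(\<Sum>\<sigma>\<in>?S. w \<sigma> v * G \<sigma>) = (\<Sum>\<sigma>\<in>?S. w (\<sigma> \<circ> swp v x) v * G (\<sigma> \<circ> swp v x))"
        by (rule sum_swp[OF vA xA])
      also have "\<dots> = (\<Sum>\<sigma>\<in>?S. w \<sigma> x * G \<sigma>)"
      proof (rule sum.cong[OF refl])
        fix \<sigma> :: "nat \<Rightarrow> int"
        have "swp v x u = u" using uv xu by (intro swp_out) auto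
        thus "w (\<sigma> \<circ> swp v x) v * G (\<sigma> \<circ> swp v x) = w \<sigma> x * G \<sigma>"
          using Gfix[OF x] unfolding w_def by simp
      qed
      finally show ?thesis .
    qed
    have "real (card M) * (\<Sum>\<sigma>\<in>?S. w \<sigma> v * G \<sigma>) = (\<Sum>x\<in>M. \<Sum>\<sigma>\<in>?S. w \<sigma> x * G \<sigma>)"
    proof -
      have "(\<Sum>x\<in>M. \<Sum>\<sigma>\<in>?S. w \<sigma> x * G \<sigma>) = (\<Sum>x\<in>M. \<Sum>\<sigma>\<in>?S. w \<sigma> v * G \<sigma>)"
        by (rule sum.cong[OF refl]) (simp add: key)
      thus ?thesis by simp
    qed
    also have "\<dots> = (\<Sum>\<sigma>\<in>?S. G \<sigma> * (\<Sum>x\<in>M. w \<sigma> x))"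
      by (subst sum.swap) (simp add: sum_distrib_left mult.commute)
    also have "\<dots> \<le> (\<Sum>\<sigma>\<in>?S. G \<sigma> * (real n * (real d1 + real d2)))"
    proof (rule sum_mono)
      fix \<sigma> assume s: "\<sigma> \<in> ?S"
      have "(\<Sum>x\<in>M. w \<sigma> x) \<le> (\<Sum>x\<in>?A. w \<sigma> x)"
        by (rule sum_mono2) (auto simp: M_def w_def)
      also have "\<dots> = real n * (real d1 + real d2)" unfolding w_def by (rule sum_weights[OF s uA])
      finally show "G \<sigma> * (\<Sum>x\<in>M. w \<sigma> x) \<le> G \<sigma> * (real n * (real d1 + real d2))"
        using Gnn by (simp add: mult_left_mono)
    qed
    also have "\<dots> = real n * (real d1 + real d2) * (\<Sum>\<sigma>\<in>?S. G \<sigma>)"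
      by (simp add: sum_distrib_right mult.commute)
    finally have A1: "real (card M) * (\<Sum>\<sigma>\<in>?S. w \<sigma> v * G \<sigma>) \<le> real n * (real d1 + real d2) * (\<Sum>\<sigma>\<in>?S. G \<sigma>)" .
    have Snn: "(\<Sum>\<sigma>\<in>?S. w \<sigma> v * G \<sigma>) \<ge> 0" using Gnn by (intro sum_nonneg) (simp add: w_def)
    have SGnn: "(\<Sum>\<sigma>\<in>?S. G \<sigma>) \<ge> 0" using Gnn by (intro sum_nonneg) simp
    have "(2 * real n - 2 * real m) * (\<Sum>\<sigma>\<in>?S. w \<sigma> v * G \<sigma>) \<le> real (card M) * (\<Sum>\<sigma>\<in>?S. w \<sigma> v * G \<sigma>)"
      using cardMr Snn by (simp add: mult_right_mono)
    with A1 have "(2 * real n - 2 * real m) * (\<Sum>\<sigma>\<in>?S. w \<sigma> v * G \<sigma>) \<le> real n * (real d1 + real d2) * (\<Sum>\<sigma>\<in>?S. G \<sigma>)"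
      by linarith
    hence A2: "(\<Sum>\<sigma>\<in>?S. w \<sigma> v * G \<sigma>) \<le> c * (\<Sum>\<sigma>\<in>?S. G \<sigma>)"
      unfolding c_def using Mpos by (simp add: field_simps)
    also have "\<dots> \<le> c * (c ^ k * real (card ?S))" using IH cpos by (rule mult_left_mono)
    finally show "(\<Sum>\<sigma>\<in>?S. \<Prod>e\<in>E. real (edge_weight d1 d2 \<sigma> e)) \<le>
        (real n * (real d1 + real d2) / (2 * real n - 2 * real m)) ^ Suc k * real (card ?S)"
      unfolding prodE c_def by simp
  qed
qed


lemma bal_finite: "finite (balanced_labellings n)"
proof (rule inj_on_finite[where f="\<lambda>\<sigma>. restrict \<sigma> {1..2*n}" and B="PiE {1..2*n} (\<lambda>_. {1,-1})"])
  show "inj_on (\<lambda>\<sigma>. restrict \<sigma> {1..2*n}) (balanced_labellings n)"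
  proof (rule inj_onI)
    fix \<sigma> \<tau> assume s: "\<sigma> \<in> balanced_labellings n" and t: "\<tau> \<in> balanced_labellings n"
      and eq: "restrict \<sigma> {1..2*n} = restrict \<tau> {1..2*n}"
    show "\<sigma> = \<tau>"
    proof
      fix i show "\<sigma> i = \<tau> i"
      proof (cases "i \<in> {1..2*n}")
        case True thus ?thesis using eq by (metis restrict_apply')
      next
        case False thus ?thesis using s t unfolding balanced_labellings_def by auto
      qed
    qed
  qed
  show "(\<lambda>\<sigma>. restrict \<sigma> {1..2*n}) ` balanced_labellings n \<subseteq> PiE {1..2*n} (\<lambda>_. {1,-1})"
    unfolding balanced_labellings_def by auto
  show "finite (PiE {1..2*n} (\<lambda>_. {1::int,-1}))" by (rule finite_PiE) auto
qed

lemma bal_nonempty: "balanced_labellings n \<noteq> {}"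
proof -
  define \<sigma>0 :: "nat \<Rightarrow> int" where "\<sigma>0 = (\<lambda>i. if i \<in> {1..n} then 1 else if i \<in> {n+1..2*n} then -1 else 0)"
  have "{i\<in>{1..2*n}. \<sigma>0 i = 1} = {1..n}" unfolding \<sigma>0_def by auto
  hence "\<sigma>0 \<in> balanced_labellings n" unfolding balanced_labellings_def by (auto simp: \<sigma>0_def)
  thus ?thesis by blast
qed

lemma pow_bound:
  fixes m n :: nat and C :: real
  assumes n1: "n \<ge> 1" and mC: "real m \<le> C * ln (real n)" and Cn: "C * ln (real n) \<le> real n / 2"
    and sm: "2 * C^2 * (ln (real n))^2 / real n \<le> 1/2"
  shows "(real n / (real n - real m)) ^ m \<le> 1 + 4 * C^2 * (ln (real n))^2 / real n"
proof -
  have npos: "real n > 0" using n1 by simp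
  have nm: "real n - real m \<ge> real n / 2" using mC Cn by linarith
  have nmpos: "real n - real m > 0" using nm npos by linarith
  define t where "t = real m / (real n - real m)"
  have t0: "t \<ge> 0" unfolding t_def using nmpos by simp
  have r: "real n / (real n - real m) = 1 + t" unfolding t_def using nmpos by (simp add: field_simps)
  have "(1 + t) ^ m \<le> exp t ^ m" using t0 by (intro power_mono) auto
  also have "\<dots> = exp (real m * t)" by (simp add: exp_of_nat_mult)
  finally have A: "(1 + t) ^ m \<le> exp (real m * t)" .
  have m0: "real m \<ge> 0" by simp
  have "real m * t = (real m)^2 / (real n - real m)" unfolding t_def by (simp add: power2_eq_square)
  also have "\<dots> \<le> (real m)^2 / (real n / 2)" using nm npos by (intro divide_left_mono) auto
  also have "\<dots> \<le> (C * ln (real n))^2 / (real n / 2)"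
    using mC m0 npos by (intro divide_right_mono power_mono) auto
  also have "\<dots> = 2 * C^2 * (ln (real n))^2 / real n" by (simp add: power_mult_distrib field_simps)
  finally have B: "real m * t \<le> 2 * C^2 * (ln (real n))^2 / real n" .
  have "exp (real m * t) \<le> 1 + 2 * (real m * t)"
    using B sm t0 by (intro real_exp_bound_lemma) auto
  also have "\<dots> \<le> 1 + 4 * C^2 * (ln (real n))^2 / real n" using B by simp
  finally show ?thesis using A r by simp
qed

theorem lemma6p13:
  fixes d1 d2 :: nat and C :: real
  assumes "d1 > 0" and "d2 > 0" and "C > 0"
  shows "\<exists>K N. \<forall>n\<ge>N. \<forall>(V :: nat set) (E :: nat set set).
    is_tree V E \<and> V \<subseteq> {1..2*n} \<and> real (card E) \<le> C * ln (real n) \<longrightarrow>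
    measure_pmf.expectation (pmf_of_set (balanced_labellings n))
      (\<lambda>\<sigma>. \<Prod>e\<in>E. real (edge_weight d1 d2 \<sigma> e) / real n)
    \<le> ((real d1 + real d2) / (2 * real n)) ^ card E * (1 + K * (ln (real n))\<^sup>2 / real n)"
proof -
  have ev1: "eventually (\<lambda>n::nat. C * ln (real n) \<le> real n / 2) at_top" using assms(3) by real_asymp
  have ev2: "eventually (\<lambda>n::nat. 2 * C^2 * (ln (real n))^2 / real n \<le> 1/2) at_top" using assms(3) by real_asymp
  have ev3: "eventually (\<lambda>n::nat. n \<ge> 1) at_top" by (rule eventually_ge_at_top)
  obtain N where N: "\<And>n. n \<ge> N \<Longrightarrow> C * ln (real n) \<le> real n / 2 \<and>
      2 * C^2 * (ln (real n))^2 / real n \<le> 1/2 \<and> n \<ge> 1"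
    using eventually_conj[OF ev1 eventually_conj[OF ev2 ev3]] unfolding eventually_at_top_linorder by blast
  show ?thesis
  proof (intro exI[of _ "4 * C^2"] exI[of _ N] allI impI, elim conjE)
    fix n V and E :: "nat set set"
    assume nN: "n \<ge> N" and tree: "is_tree V E" and VA: "V \<subseteq> {1..2*n}" and mC: "real (card E) \<le> C * ln (real n)"
    let ?S = "balanced_labellings n"
    define m where "m = card E"
    have Cn: "C * ln (real n) \<le> real n / 2" and sm: "2 * C^2 * (ln (real n))^2 / real n \<le> 1/2"
      and n1: "n \<ge> 1" using N[OF nN] by auto
    have npos: "real n > 0" using n1 by simp
    have mn: "m < n" using mC Cn npos unfolding m_def by linarith
    have sg: "simple_graph V E" and nc: "\<not> has_cycle E" using tree unfolding is_tree_def by auto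
    have finV: "finite V" and edges0: "\<forall>e\<in>E. \<exists>u w. e = {u, w} \<and> u \<noteq> w \<and> u \<in> V \<and> w \<in> V"
      using sg unfolding simple_graph_def by auto
    have "E \<subseteq> Pow V"
    proof
      fix e assume "e \<in> E"
      then obtain a b where "e = {a,b}" "a \<in> V" "b \<in> V" using edges0 by blast
      thus "e \<in> Pow V" by simp
    qed
    moreover have "finite (Pow V)" using finV by simp
    ultimately have finE: "finite E" by (rule finite_subset)
    have edges: "\<forall>e\<in>E. \<exists>a b. e = {a,b} \<and> a \<noteq> b \<and> a \<in> {1..2*n} \<and> b \<in> {1..2*n}"
    proof
      fix e assume "e \<in> E"
      then obtain a b where ab: "e = {a,b}" "a \<noteq> b" "a \<in> V" "b \<in> V" using edges0 by blast
      have "a \<in> {1..2*n}" "b \<in> {1..2*n}" using ab(3,4) VA by (auto simp del: atLeastAtMost_iff)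
      thus "\<exists>a b. e = {a,b} \<and> a \<noteq> b \<and> a \<in> {1..2*n} \<and> b \<in> {1..2*n}" using ab(1,2) by blast
    qed
    define c where "c = real n * (real d1 + real d2) / (2 * real n - 2 * real m)"
    have sumb: "(\<Sum>\<sigma>\<in>?S. \<Prod>e\<in>E. real (edge_weight d1 d2 \<sigma> e)) \<le> c ^ m * real (card ?S)"
      unfolding c_def
    proof (rule main_sum[OF mn, rule_format])
      show "finite E \<and> (\<forall>e\<in>E. \<exists>a b. e = {a,b} \<and> a \<noteq> b \<and> a \<in> {1..2*n} \<and> b \<in> {1..2*n})
          \<and> \<not> has_cycle E \<and> card E = m \<and> m \<le> m" using finE edges nc unfolding m_def by blast
    qed
    have cardS: "real (card ?S) > 0" using bal_finite bal_nonempty card_gt_0_iff by auto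
    have "measure_pmf.expectation (pmf_of_set ?S) (\<lambda>\<sigma>. \<Prod>e\<in>E. real (edge_weight d1 d2 \<sigma> e) / real n)
        = (\<Sum>\<sigma>\<in>?S. \<Prod>e\<in>E. real (edge_weight d1 d2 \<sigma> e) / real n) / real (card ?S)"
      by (rule integral_pmf_of_set[OF bal_nonempty bal_finite])
    also have "(\<Sum>\<sigma>\<in>?S. \<Prod>e\<in>E. real (edge_weight d1 d2 \<sigma> e) / real n)
        = (\<Sum>\<sigma>\<in>?S. \<Prod>e\<in>E. real (edge_weight d1 d2 \<sigma> e)) / real n ^ m"
      by (simp add: prod_dividef sum_divide_distrib m_def)
    also have "\<dots> / real (card ?S) \<le> c ^ m * real (card ?S) / real n ^ m / real (card ?S)"
      using sumb npos cardS by (intro divide_right_mono) auto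
    also have "\<dots> = (c / real n) ^ m" using cardS by (simp add: power_divide)
    also have "c / real n = ((real d1 + real d2) / (2 * real n)) * (real n / (real n - real m))"
      unfolding c_def using npos mn by (simp add: field_simps)
    also have "(((real d1 + real d2) / (2 * real n)) * (real n / (real n - real m))) ^ m
        = ((real d1 + real d2) / (2 * real n)) ^ m * (real n / (real n - real m)) ^ m"
      by (rule power_mult_distrib)
    also have "\<dots> \<le> ((real d1 + real d2) / (2 * real n)) ^ m * (1 + 4 * C^2 * (ln (real n))^2 / real n)"
      using pow_bound[OF n1 mC[folded m_def] Cn sm] by (intro mult_left_mono) auto
    finally show "measure_pmf.expectation (pmf_of_set ?S) (\<lambda>\<sigma>. \<Prod>e\<in>E. real (edge_weight d1 d2 \<sigma> e) / real n)
      \<le> ((real d1 + real d2) / (2 * real n)) ^ card E * (1 + 4 * C^2 * (ln (real n))\<^sup>2 / real n)"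
      unfolding m_def .
  qed
qed

end
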